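(* Suppose $f$ is globally Lipschitz continuous on $\mathbb{R}^{n\times p}$. Then for every $\beta>0$, the function $h$ is bounded below on $\mathbb{R}^{n\times p}$.
   Context: $f:\mathbb{R}^{n\times p}\to\mathbb{R}$ is differentiable with $f$ and $\nabla f$ locally Lipschitz. $\mathcal{A}(X):=\frac32I_p-\frac12X^\top X$, and $h(X):=f(X\mathcal{A}(X))+\frac{\beta}{4}\|X^\top X-I_p\|_F^2$. *)

theory Defs
  imports "HOL-Analysis.Analysis"
begin

text \<open>Matrices in R^(n x p) are rendered as real^'p^'n (n rows, p columns).
  The norm on this type is the Frobenius norm and the inner product is the
  Frobenius inner product.\<close>

definition locally_lipschitz :: "('a::metric_space \<Rightarrow> 'b::metric_space) \<Rightarrow> bool" where
  "locally_lipschitz g \<longleftrightarrow> (\<forall>x. \<exists>e>0. \<exists>L. L-lipschitz_on (ball x e) g)"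

definition globally_lipschitz :: "('a::metric_space \<Rightarrow> 'b::metric_space) \<Rightarrow> bool" where
  "globally_lipschitz g \<longleftrightarrow> (\<exists>L. L-lipschitz_on UNIV g)"

definition calA :: "real^'p^'n \<Rightarrow> real^'p^'p" where
  "calA X = (3/2) *\<^sub>R mat 1 - (1/2) *\<^sub>R (transpose X ** X)"

definition hfun :: "(real^'p^'n \<Rightarrow> real) \<Rightarrow> real \<Rightarrow> real^'p^'n \<Rightarrow> real" where
  "hfun f \<beta> X = f (X ** calA X) + (\<beta> / 4) * (norm (transpose X ** X - mat 1))\<^sup>2"

end

theory Submission imports Defs begin

lemma norm_sq_vec: "(norm (x::real^'n))^2 = (\<Sum>i\<in>UNIV. (x$i)^2)"
  unfolding power2_norm_eq_inner inner_vec_def by (simp add: power2_eq_square)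

lemma norm_sq_mat: "(norm (X::real^'p^'n))^2 = (\<Sum>i\<in>UNIV. (norm (X$i))^2)"
  by (simp add: power2_norm_eq_inner inner_vec_def)

lemma norm_sq_mat2: "(norm (X::real^'p^'n))^2 = (\<Sum>i\<in>UNIV. \<Sum>j\<in>UNIV. (X$i$j)^2)"
  by (simp add: norm_sq_mat norm_sq_vec)

lemma frob_submult:
  fixes X :: "real^'k^'n" and Y :: "real^'p^'k"
  shows "norm (X ** Y) \<le> norm X * norm Y"
proof -
  have e: "\<bar>(X ** Y)$i$j\<bar> \<le> norm (X$i) * norm (column j Y)" for i j
  proof -
    have "(X ** Y)$i$j = (X$i) \<bullet> column j Y"
      by (simp add: matrix_matrix_mult_def column_def inner_vec_def)
    thus ?thesis by (simp add: Cauchy_Schwarz_ineq2)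
  qed
  have "(norm (X ** Y))^2 = (\<Sum>i\<in>UNIV. \<Sum>j\<in>UNIV. ((X ** Y)$i$j)^2)" by (rule norm_sq_mat2)
  also have "\<dots> \<le> (\<Sum>i\<in>UNIV. \<Sum>j\<in>UNIV. (norm (X$i))^2 * (norm (column j Y))^2)"
  proof (intro sum_mono)
    fix i j
    have "((X ** Y)$i$j)^2 = \<bar>(X ** Y)$i$j\<bar>^2" by simp
    also have "\<dots> \<le> (norm (X$i) * norm (column j Y))^2"
      by (intro power_mono e) simp
    finally show "((X ** Y)$i$j)^2 \<le> (norm (X$i))^2 * (norm (column j Y))^2"
      by (simp add: power_mult_distrib)
  qed
  also have "\<dots> = (\<Sum>i\<in>UNIV. (norm (X$i))^2) * (\<Sum>j\<in>UNIV. (norm (column j Y))^2)"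
    by (rule sum_product[symmetric])
  also have "(\<Sum>j\<in>UNIV. (norm (column j Y))^2) = (norm Y)^2"
  proof -
    have "(\<Sum>j\<in>UNIV. (norm (column j Y))^2) = (\<Sum>j\<in>UNIV. \<Sum>k\<in>UNIV. (Y$k$j)^2)"
      by (simp add: norm_sq_vec column_def)
    also have "\<dots> = (\<Sum>k\<in>UNIV. \<Sum>j\<in>UNIV. (Y$k$j)^2)" by (rule sum.swap)
    also have "\<dots> = (norm Y)^2" by (simp add: norm_sq_mat2)
    finally show ?thesis .
  qed
  also have "(\<Sum>i\<in>UNIV. (norm (X$i))^2) = (norm X)^2" by (simp add: norm_sq_mat)
  finally have "(norm (X ** Y))^2 \<le> (norm X * norm Y)^2" by (simp add: power_mult_distrib)
  thus ?thesis by (rule power2_le_imp_le) simp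
qed

lemma norm_sq_trace:
  fixes X :: "real^'p^'n"
  shows "(norm X)^2 = (transpose X ** X) \<bullet> mat 1"
proof -
  have "(transpose X ** X) \<bullet> mat 1 = (\<Sum>i\<in>UNIV. (transpose X ** X)$i$i)"
    by (simp add: inner_vec_def mat_def if_distrib cong: if_cong)
  also have "\<dots> = (\<Sum>i\<in>UNIV. \<Sum>k\<in>UNIV. (X$k$i)^2)"
    by (simp add: matrix_matrix_mult_def transpose_def power2_eq_square)
  also have "\<dots> = (\<Sum>k\<in>UNIV. \<Sum>i\<in>UNIV. (X$k$i)^2)" by (rule sum.swap)
  also have "\<dots> = (norm X)^2" by (simp add: norm_sq_mat2)
  finally show ?thesis by simp
qed

lemma real_bound:
  fixes L \<beta> c d x :: real
  assumes "L \<ge> 0" "\<beta> > 0" "c \<ge> 0" "d \<ge> 0" "x \<ge> 0" "x^2 \<le> d*c + c^2"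
  defines "K \<equiv> L^2/(2*\<beta>) + L*c/2"
  shows "L * x * (c + d/2) - \<beta>/4 * d^2 \<le> K*c^2 + L*c/2 + 2*(K*c)^2/\<beta>"
proof -
  have K0: "K \<ge> 0" using assms unfolding K_def by simp
  have a: "L*x*d/2 \<le> \<beta>/8 * d^2 + L^2*x^2/(2*\<beta>)"
  proof -
    have "0 \<le> (\<beta>/2*d - L*x)^2/(2*\<beta>)" using assms by simp
    also have "\<dots> = \<beta>/8 * d^2 + L^2*x^2/(2*\<beta>) - L*x*d/2"
      using assms by (simp add: power2_eq_square field_simps)
    finally show ?thesis by simp
  qed
  have b: "L*x*c \<le> L*c*(1+x^2)/2"
  proof -
    have "x \<le> (1+x^2)/2" using sum_squares_ge_zero[of "x - 1" 0]
      by (simp add: power2_eq_square algebra_simps)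
    hence "L*c*x \<le> L*c*((1+x^2)/2)" using assms by (intro mult_left_mono) simp_all
    thus ?thesis by (simp add: algebra_simps)
  qed
  have c: "L * x * (c + d/2) \<le> \<beta>/8 * d^2 + K*x^2 + L*c/2"
  proof -
    have eq1: "L*x*(c+d/2) = L*x*c + L*x*d/2" by (simp add: algebra_simps)
    have eq2: "K*x^2 = L^2*x^2/(2*\<beta>) + L*c*(1+x^2)/2 - L*c/2" by (simp add: K_def field_simps)
    show ?thesis using a b eq1 eq2 by linarith
  qed
  have d: "K*x^2 \<le> K*(d*c + c^2)" using K0 assms by (intro mult_left_mono) simp_all
  have e: "K*c*d - \<beta>/8 * d^2 \<le> 2*(K*c)^2/\<beta>"
  proof -
    have "0 \<le> (\<beta>/4*d - K*c)^2/(\<beta>/2)" using assms by simp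
    also have "\<dots> = \<beta>/8*d^2 - K*c*d + 2*(K*c)^2/\<beta>"
      using assms by (simp add: power2_eq_square field_simps)
    finally show ?thesis by simp
  qed
  show ?thesis using c d e by (simp add: algebra_simps)
qed

theorem mainTheorem6:
  fixes f :: "real^'p^'n \<Rightarrow> real"
    and gradf :: "real^'p^'n \<Rightarrow> real^'p^'n"
    and \<beta> :: real
  assumes grad: "\<And>X. (f has_derivative (\<lambda>H. gradf X \<bullet> H)) (at X)"
    and f_loc: "locally_lipschitz f"
    and grad_loc: "locally_lipschitz gradf"
    and f_glob: "globally_lipschitz f"
    and beta_pos: "\<beta> > 0"
  shows "bdd_below (range (hfun f \<beta>))"
proof -
  obtain L where L: "L-lipschitz_on UNIV f" using f_glob unfolding globally_lipschitz_def by blast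
  have L0: "L \<ge> 0" using L lipschitz_on_nonneg by blast
  define c where "c = norm (mat 1 :: real^'p^'p)"
  define K where "K = L^2/(2*\<beta>) + L*c/2"
  have c0: "c \<ge> 0" unfolding c_def by simp
  have "hfun f \<beta> X \<ge> f 0 - (K*c^2 + L*c/2 + 2*(K*c)^2/\<beta>)" for X :: "real^'p^'n"
  proof -
    define D where "D = transpose X ** X - mat 1"
    define d where "d = norm D"
    define x where "x = norm X"
    have MD: "transpose X ** X = D + mat 1" unfolding D_def by simp
    have "x^2 = (D + mat 1) \<bullet> mat 1" unfolding x_def using norm_sq_trace[of X] MD by simp
    also have "\<dots> = D \<bullet> mat 1 + c^2" unfolding c_def by (simp add: inner_add_left power2_norm_eq_inner)
    also have "D \<bullet> mat 1 \<le> d * c" unfolding d_def c_def by (meson abs_ge_self order_trans Cauchy_Schwarz_ineq2)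
    finally have xsq: "x^2 \<le> d*c + c^2" by simp
    have A: "calA X = mat 1 - (1/2) *\<^sub>R D"
    proof -
      have h: "(3/2::real) *\<^sub>R (mat 1::real^'p^'p) = mat 1 + (1/2) *\<^sub>R mat 1"
        using scaleR_add_left[of 1 "1/2" "mat 1::real^'p^'p"] by simp
      show ?thesis unfolding calA_def MD h by (simp add: algebra_simps scaleR_add_right)
    qed
    have nA: "norm (calA X) \<le> c + d/2" unfolding A c_def d_def
      by (rule order_trans[OF norm_triangle_ineq4]) simp
    have nY: "norm (X ** calA X) \<le> x * (c + d/2)" unfolding x_def
      by (rule order_trans[OF frob_submult]) (intro mult_left_mono nA, simp)
    have "dist (f (X ** calA X)) (f 0) \<le> L * dist (X ** calA X) 0"
      using L by (rule lipschitz_onD) simp_all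
    hence "f (X ** calA X) \<ge> f 0 - L * norm (X ** calA X)" by (simp add: dist_norm abs_le_iff)
    moreover have "L * norm (X ** calA X) \<le> L * (x * (c + d/2))" using nY L0 by (rule mult_left_mono)
    moreover have "L * x * (c + d/2) - \<beta>/4 * d^2 \<le> K*c^2 + L*c/2 + 2*(K*c)^2/\<beta>"
      unfolding K_def using real_bound[OF L0 beta_pos c0 _ _ xsq] by (simp add: d_def x_def)
    ultimately show ?thesis unfolding hfun_def D_def[symmetric] d_def[symmetric]
      by (simp add: algebra_simps)
  qed
  thus ?thesis by (intro bdd_belowI2) blast
qed

end
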